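(* Let $V$ be an Orlicz function and $R\in(0,\infty)$. Define $\varphi_V:(-\infty,0)\times C_b(\mathbb R)\to\mathbb R$ by $\varphi_V(\alpha,\lambda):=\log\int_{\mathbb R}e^{\alpha V(x)+\lambda(x)}dx$. Then for each $\lambda\in C_b(\mathbb R)$ there exists a unique $\alpha=\alpha(\lambda)\in(-\infty,0)$ such that $$\frac{d}{d\alpha}\varphi_V(\alpha(\lambda),\lambda)=R\quad\text{and}\quad\frac{d^2}{d\alpha^2}\varphi_V(\alpha(\lambda),\lambda)\in(0,\infty).$$ Moreover, the map $\lambda\mapsto\varphi_V(\alpha(\lambda),\lambda)$ is Fréchet-differentiable on $C_b(\mathbb R)$, and $$\varphi_V(\alpha(\lambda),\lambda)-\alpha(\lambda)R=\inf_{\alpha<0}\big[\varphi_V(\alpha,\lambda)-\alpha R\big].$$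
   Context: An Orlicz function is a convex, symmetric function $V:\mathbb R\to[0,\infty)$ with $V(0)=0$ and $V(x)>0$ for $x\ne0$. $C_b(\mathbb R)$ denotes the space of bounded continuous real functions on $\mathbb R$ with the supremum norm. *)

theory Defs
  imports "HOL-Analysis.Analysis"
begin

definition orlicz :: "(real \<Rightarrow> real) \<Rightarrow> bool" where
  "orlicz V \<longleftrightarrow> convex_on UNIV V \<and> (\<forall>x. V (- x) = V x) \<and> V 0 = 0
     \<and> (\<forall>x. x \<noteq> 0 \<longrightarrow> V x > 0)"

definition phiV :: "(real \<Rightarrow> real) \<Rightarrow> real \<Rightarrow> (real \<Rightarrow>\<^sub>C real) \<Rightarrow> real" where
  "phiV V a lam = ln (\<integral>x. exp (a * V x + apply_bcontfun lam x) \<partial>lborel)"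

definition good_alpha :: "(real \<Rightarrow> real) \<Rightarrow> real \<Rightarrow> (real \<Rightarrow>\<^sub>C real) \<Rightarrow> real \<Rightarrow> bool" where
  "good_alpha V R lam a \<longleftrightarrow> a < 0
     \<and> ((\<lambda>b. phiV V b lam) has_real_derivative R) (at a)
     \<and> (\<exists>D2. D2 > 0 \<and> (deriv (\<lambda>b. phiV V b lam) has_real_derivative D2) (at a))"

definition alpha_of :: "(real \<Rightarrow> real) \<Rightarrow> real \<Rightarrow> (real \<Rightarrow>\<^sub>C real) \<Rightarrow> real" where
  "alpha_of V R lam = (THE a. good_alpha V R lam a)"

end

theory Submission
  imports Defs "HOL-Probability.Sinc_Integral"
begin
lemma exp_rem: "\<bar>exp (d::real) - 1 - d\<bar> \<le> d\<^sup>2 * exp \<bar>d\<bar>"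
proof -
  obtain t where t: "\<bar>t\<bar> \<le> \<bar>d\<bar>" "exp d = (\<Sum>m<2. (d ^ m) / fact m) + (exp t / fact 2) * d ^ 2"
    using Maclaurin_exp_le[of d 2] by blast
  have "exp d - 1 - d = exp t / 2 * d\<^sup>2" using t(2) by (simp add: numeral_2_eq_2)
  moreover have "exp t \<le> exp \<bar>d\<bar>" using t(1) by simp
  ultimately have "\<bar>exp d - 1 - d\<bar> = exp t / 2 * d\<^sup>2"
    by (metis abs_of_nonneg divide_nonneg_nonneg exp_ge_zero zero_le_power2 mult_nonneg_nonneg zero_le_numeral)
  also have "\<dots> \<le> exp \<bar>d\<bar> * d\<^sup>2"
  proof (rule mult_right_mono)
    show "exp t / 2 \<le> exp \<bar>d\<bar>" using \<open>exp t \<le> exp \<bar>d\<bar>\<close> exp_gt_zero[of t] by linarith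
  qed simp
  finally show ?thesis by (simp add: mult.commute)
qed

lemma pow_le_exp: assumes "(x::real) \<ge> 0" shows "x ^ n \<le> fact n * exp x"
proof -
  obtain t where t: "\<bar>t\<bar> \<le> \<bar>x\<bar>" "exp x = (\<Sum>m<Suc n. (x ^ m) / fact m) + (exp t / fact (Suc n)) * x ^ Suc n"
    using Maclaurin_exp_le[of x "Suc n"] by blast
  have "x ^ n / fact n \<le> (\<Sum>m<Suc n. (x ^ m) / fact m)"
    by (rule member_le_sum[where f="\<lambda>m. x ^ m / fact m" and i=n]) (use assms in auto)
  also have "\<dots> \<le> exp x" using t(2) assms by simp
  finally show ?thesis by (simp add: field_simps)
qed

lemma int_exp_abs: assumes "(c::real) > 0" shows "integrable lborel (\<lambda>x. exp (- c * \<bar>x\<bar>))"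
proof -
  define f where "f = (\<lambda>x::real. indicator {0<..} x *\<^sub>R exp (-(x * c)))"
  have f: "integrable lborel f" using integrable_I0i_exp_mscale[OF assms] by (simp add: f_def set_integrable_def)
  have g: "integrable lborel (\<lambda>x. f (1 + (-1) * x))" by (rule lborel_integrable_real_affine[OF f]) simp
  have "integrable lborel (\<lambda>x. f x + exp c * f (1 + (-1) * x))"
    using f g by auto
  then show ?thesis
  proof (rule Bochner_Integration.integrable_bound)
    show "(\<lambda>x. exp (- c * \<bar>x\<bar>)) \<in> borel_measurable lborel" by measurable
    show "AE x in lborel. norm (exp (- c * \<bar>x\<bar>)) \<le> norm (f x + exp c * f (1 + (-1) * x))"
    proof (rule AE_I2)
      fix x :: real
      show "norm (exp (- c * \<bar>x\<bar>)) \<le> norm (f x + exp c * f (1 + (-1) * x))"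
      proof (cases "x > 0")
        case True then show ?thesis by (simp add: f_def indicator_def mult.commute)
      next
        case False
        then have "exp (- c * \<bar>x\<bar>) = exp c * exp (-((1 - x) * c))"
          by (simp add: algebra_simps) (subst exp_add[symmetric], simp)
        then show ?thesis using False by (simp add: f_def indicator_def)
      qed
    qed
  qed
qed

locale orl = fixes V :: "real \<Rightarrow> real" assumes orl: "orlicz V"
begin

lemma cvx: "convex_on UNIV V" using orl by (simp add: orlicz_def)
lemma V0[simp]: "V 0 = 0" using orl by (simp add: orlicz_def)
lemma Vsym[simp]: "V (- x) = V x" using orl by (simp add: orlicz_def)
lemma Vpos: "x \<noteq> 0 \<Longrightarrow> V x > 0" using orl by (simp add: orlicz_def)
lemma Vnn[simp]: "V x \<ge> 0" using Vpos[of x] by (cases "x = 0") auto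
lemma V1: "V 1 > 0" by (rule Vpos) simp

lemma Vscale: assumes "0 \<le> t" "t \<le> 1" shows "V (t * y) \<le> t * V y"
  using convex_onD[OF cvx, of t 0 y] assms by simp

lemma Vabs: "V \<bar>x\<bar> = V x" by (cases "x \<ge> 0") auto

lemma Vmono: assumes "0 \<le> x" "x \<le> y" shows "V x \<le> V y"
proof (cases "y = 0")
  case True then show ?thesis using assms by simp
next
  case False
  then have y: "y > 0" using assms by simp
  have "V x = V ((x / y) * y)" using y by simp
  also have "\<dots> \<le> (x / y) * V y" using assms y by (intro Vscale) auto
  also have "\<dots> \<le> V y" using assms y by (intro mult_left_le_one_le) auto
  finally show ?thesis .
qed

lemma Vmono_abs: "\<bar>x\<bar> \<le> \<bar>y\<bar> \<Longrightarrow> V x \<le> V y"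
  using Vmono[of "\<bar>x\<bar>" "\<bar>y\<bar>"] by (simp add: Vabs)

lemma Vlower: "V 1 * (\<bar>x\<bar> - 1) \<le> V x"
proof (cases "\<bar>x\<bar> \<ge> 1")
  case True
  have "V 1 = V ((1 / \<bar>x\<bar>) * \<bar>x\<bar>)" using True by simp
  also have "\<dots> \<le> (1 / \<bar>x\<bar>) * V \<bar>x\<bar>" using True by (intro Vscale) auto
  finally have "\<bar>x\<bar> * V 1 \<le> V x" using True by (simp add: Vabs field_simps)
  then show ?thesis using V1 by (simp add: algebra_simps)
next
  case False
  then have "V 1 * (\<bar>x\<bar> - 1) \<le> 0" using V1 by (simp add: mult_nonneg_nonpos)
  then show ?thesis using Vnn[of x] by linarith
qed

lemma Vupper: assumes "\<bar>x\<bar> \<le> 1" shows "V x \<le> \<bar>x\<bar> * V 1"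
  using Vscale[of "\<bar>x\<bar>" 1] assms by (simp add: Vabs)

lemma Vcont: "continuous_on UNIV V"
  by (rule convex_on_continuous[OF _ cvx]) simp

lemma Vmeas[measurable]: "V \<in> borel_measurable borel"
  by (rule borel_measurable_continuous_onI[OF Vcont])

lemma int_pow: assumes "\<beta> < 0" shows "integrable lborel (\<lambda>x. V x ^ n * exp (\<beta> * V x))"
proof -
  define g where "g = - \<beta> / 2"
  have g: "g > 0" using assms by (simp add: g_def)
  define C where "C = fact n / g ^ n * exp (g * V 1)"
  have "integrable lborel (\<lambda>x. C * exp (- (g * V 1) * \<bar>x\<bar>))"
    using int_exp_abs[of "g * V 1"] g V1 by simp
  then show ?thesis
  proof (rule Bochner_Integration.integrable_bound)
    show "(\<lambda>x. V x ^ n * exp (\<beta> * V x)) \<in> borel_measurable lborel" by measurable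
    show "AE x in lborel. norm (V x ^ n * exp (\<beta> * V x)) \<le> norm (C * exp (- (g * V 1) * \<bar>x\<bar>))"
    proof (rule AE_I2)
      fix x
      have "(g * V x) ^ n \<le> fact n * exp (g * V x)" using g by (intro pow_le_exp) simp
      then have a: "V x ^ n \<le> fact n / g ^ n * exp (g * V x)"
        using g by (simp add: power_mult_distrib field_simps)
      have "V x ^ n * exp (\<beta> * V x) \<le> fact n / g ^ n * exp (g * V x) * exp (\<beta> * V x)"
        by (intro mult_right_mono a) simp
      also have "\<dots> = fact n / g ^ n * exp (g * V x + \<beta> * V x)"
        by (simp add: exp_add)
      also have "\<dots> = fact n / g ^ n * exp (- g * V x)"
        by (rule arg_cong[where f="\<lambda>u. fact n / g ^ n * exp u"]) (simp add: g_def field_simps)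
      also have "\<dots> \<le> fact n / g ^ n * exp (- g * (V 1 * (\<bar>x\<bar> - 1)))"
        using Vlower[of x] g by (intro mult_left_mono) auto
      also have "\<dots> = fact n / g ^ n * exp (g * V 1 + (- (g * V 1) * \<bar>x\<bar>))"
        by (rule arg_cong[where f="\<lambda>u. fact n / g ^ n * exp u"]) (simp add: field_simps)
      also have "\<dots> = C * exp (- (g * V 1) * \<bar>x\<bar>)"
        by (simp only: C_def exp_add mult.assoc)
      finally show "norm (V x ^ n * exp (\<beta> * V x)) \<le> norm (C * exp (- (g * V 1) * \<bar>x\<bar>))"
        using g by (simp add: C_def)
    qed
  qed
qed

end

lemma bcf_meas[measurable]: "apply_bcontfun f \<in> borel_measurable borel"
  by (rule borel_measurable_continuous_onI) simp

lemma bcf_bound: "\<bar>apply_bcontfun f x\<bar> \<le> norm f"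
  using norm_bounded[of f x] by simp

definition Ik :: "(real \<Rightarrow> real) \<Rightarrow> nat \<Rightarrow> real \<Rightarrow> (real \<Rightarrow>\<^sub>C real) \<Rightarrow> real" where
  "Ik V k a l = (\<integral>x. V x ^ k * exp (a * V x + apply_bcontfun l x) \<partial>lborel)"

definition Jk :: "(real \<Rightarrow> real) \<Rightarrow> nat \<Rightarrow> real \<Rightarrow> (real \<Rightarrow>\<^sub>C real) \<Rightarrow> (real \<Rightarrow>\<^sub>C real) \<Rightarrow> real" where
  "Jk V k a l h = (\<integral>x. V x ^ k * apply_bcontfun h x * exp (a * V x + apply_bcontfun l x) \<partial>lborel)"

lemma has_derivative_quad:
  fixes f :: "'a::real_normed_vector \<Rightarrow> 'b::real_normed_vector"
  assumes "bounded_linear L" "r > 0" "C \<ge> 0"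
    and b: "\<And>y. norm (y - x) < r \<Longrightarrow> norm (f y - f x - L (y - x)) \<le> C * (norm (y - x))\<^sup>2"
  shows "(f has_derivative L) (at x)"
  unfolding has_derivative_at_alt
proof (intro conjI allI impI assms(1))
  fix e :: real assume e: "e > 0"
  show "\<exists>d>0. \<forall>y. norm (y - x) < d \<longrightarrow> norm (f y - f x - L (y - x)) \<le> e * norm (y - x)"
  proof (intro exI[of _ "min r (e / (C + 1))"] conjI allI impI)
    show "min r (e / (C + 1)) > 0" using assms e by simp
    fix y assume y: "norm (y - x) < min r (e / (C + 1))"
    have "norm (f y - f x - L (y - x)) \<le> C * (norm (y - x))\<^sup>2" using y b by simp
    also have "\<dots> = (C * norm (y - x)) * norm (y - x)" by (simp add: power2_eq_square)
    also have "\<dots> \<le> e * norm (y - x)"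
    proof (rule mult_right_mono)
      have "C * norm (y - x) \<le> C * (e / (C + 1))" using y assms by (intro mult_left_mono) auto
      also have "\<dots> \<le> e" using assms e by (simp add: field_simps)
      finally show "C * norm (y - x) \<le> e" .
    qed simp
    finally show "norm (f y - f x - L (y - x)) \<le> e * norm (y - x)" .
  qed
qed

lemma pt3:
  fixes A b B E :: real
  assumes "\<bar>b\<bar> \<le> B" "A \<ge> 0" "E \<ge> 0"
  shows "A * \<bar>b\<bar> * E \<le> B * (A * E)"
proof -
  have "A * \<bar>b\<bar> * E = \<bar>b\<bar> * (A * E)" by (simp add: ac_simps)
  also have "\<dots> \<le> B * (A * E)" by (rule mult_right_mono) (use assms in auto)
  finally show ?thesis .
qed

lemma rem_pt:
  fixes v s \<eta> \<rho> r a0 m0 M :: real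
  assumes v: "v \<ge> 0" and s: "\<bar>s\<bar> \<le> \<rho>" and \<eta>: "\<bar>\<eta>\<bar> \<le> \<rho>" and \<rho>: "\<rho> \<le> r" "r \<le> 1" "r \<le> - a0 / 2"
    and m0: "\<bar>m0\<bar> \<le> M"
  shows "\<bar>v ^ k * (exp ((a0 + s) * v + (m0 + \<eta>)) - exp (a0 * v + m0) - (s * v + \<eta>) * exp (a0 * v + m0))\<bar>
    \<le> \<rho>\<^sup>2 * (exp (M + 1) * (v ^ k * (v + 1)\<^sup>2 * exp (a0 / 2 * v)))"
proof -
  define u0 where "u0 = a0 * v + m0"
  define d where "d = s * v + \<eta>"
  have e1: "exp ((a0 + s) * v + (m0 + \<eta>)) = exp u0 * exp d"
    by (simp add: u0_def d_def flip: exp_add) (simp add: algebra_simps)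
  have "\<bar>d\<bar> \<le> \<bar>s\<bar> * v + \<bar>\<eta>\<bar>" using v by (simp add: d_def abs_mult) (metis abs_mult abs_of_nonneg abs_triangle_ineq v)
  also have "\<dots> \<le> \<rho> * v + \<rho>" using s \<eta> v by (intro add_mono mult_right_mono) auto
  finally have dle: "\<bar>d\<bar> \<le> \<rho> * (v + 1)" by (simp add: algebra_simps)
  have rho0: "\<rho> \<ge> 0" using s by linarith
  have d2: "d\<^sup>2 \<le> \<rho>\<^sup>2 * (v + 1)\<^sup>2"
  proof -
    have "d\<^sup>2 = \<bar>d\<bar>\<^sup>2" by simp
    also have "\<dots> \<le> (\<rho> * (v + 1))\<^sup>2" using dle by (intro power_mono) auto
    finally show ?thesis by (simp add: power_mult_distrib)
  qed
  have "\<bar>d\<bar> \<le> r * (v + 1)" using dle \<rho> v by (meson add_nonneg_nonneg mult_right_mono order_trans zero_le_one)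
  also have "\<dots> \<le> - a0 / 2 * v + 1"
  proof -
    have "r * v \<le> - a0 / 2 * v" using \<rho> v by (intro mult_right_mono) auto
    then show ?thesis unfolding distrib_left mult_1_right using \<rho>(2) by linarith
  qed
  finally have dle2: "\<bar>d\<bar> \<le> - a0 / 2 * v + 1" .
  have eu: "exp u0 * exp \<bar>d\<bar> \<le> exp (M + 1) * exp (a0 / 2 * v)"
  proof -
    have "exp u0 * exp \<bar>d\<bar> = exp (u0 + \<bar>d\<bar>)" by (simp add: exp_add)
    also have "\<dots> \<le> exp (M + 1 + a0 / 2 * v)" using dle2 m0 by (simp add: u0_def) 
    also have "\<dots> = exp (M + 1) * exp (a0 / 2 * v)" by (simp add: exp_add)
    finally show ?thesis .
  qed
  have "\<bar>v ^ k * (exp ((a0 + s) * v + (m0 + \<eta>)) - exp (a0 * v + m0) - (s * v + \<eta>) * exp (a0 * v + m0))\<bar>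
      = v ^ k * exp u0 * \<bar>exp d - 1 - d\<bar>"
  proof -
    have "v ^ k * (exp ((a0 + s) * v + (m0 + \<eta>)) - exp (a0 * v + m0) - (s * v + \<eta>) * exp (a0 * v + m0))
      = v ^ k * exp u0 * (exp d - 1 - d)"
      unfolding e1 u0_def[symmetric] d_def[symmetric] by (simp add: algebra_simps)
    then have "\<bar>v ^ k * (exp ((a0 + s) * v + (m0 + \<eta>)) - exp (a0 * v + m0) - (s * v + \<eta>) * exp (a0 * v + m0))\<bar>
      = \<bar>v ^ k * exp u0 * (exp d - 1 - d)\<bar>" by (rule arg_cong)
    also have "\<dots> = v ^ k * exp u0 * \<bar>exp d - 1 - d\<bar>" using v by (simp add: abs_mult)
    finally show ?thesis .
  qed
  also have "\<dots> \<le> v ^ k * exp u0 * (d\<^sup>2 * exp \<bar>d\<bar>)"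
    using v by (intro mult_left_mono exp_rem) auto
  also have "\<dots> = v ^ k * d\<^sup>2 * (exp u0 * exp \<bar>d\<bar>)" by (simp add: algebra_simps)
  also have "\<dots> \<le> v ^ k * (\<rho>\<^sup>2 * (v + 1)\<^sup>2) * (exp (M + 1) * exp (a0 / 2 * v))"
    by (rule mult_mono[OF mult_left_mono[OF d2] eu]) (use v in auto)
  also have "\<dots> = \<rho>\<^sup>2 * (exp (M + 1) * (v ^ k * (v + 1)\<^sup>2 * exp (a0 / 2 * v)))"
    by (simp add: algebra_simps)
  finally show ?thesis .
qed

context orl begin

lemma int_I: assumes "a < 0" shows "integrable lborel (\<lambda>x. V x ^ k * exp (a * V x + apply_bcontfun l x))"
proof -
  have "integrable lborel (\<lambda>x. exp (norm l) * (V x ^ k * exp (a * V x)))"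
    using int_pow[OF assms] by simp
  then show ?thesis
  proof (rule Bochner_Integration.integrable_bound)
    show "(\<lambda>x. V x ^ k * exp (a * V x + apply_bcontfun l x)) \<in> borel_measurable lborel" by measurable
    show "AE x in lborel. norm (V x ^ k * exp (a * V x + apply_bcontfun l x)) \<le> norm (exp (norm l) * (V x ^ k * exp (a * V x)))"
    proof (rule AE_I2)
      fix x
      have "exp (a * V x + apply_bcontfun l x) \<le> exp (norm l) * exp (a * V x)"
        using bcf_bound[of l x] by (simp add: mult.commute flip: exp_add)
      then show "norm (V x ^ k * exp (a * V x + apply_bcontfun l x)) \<le> norm (exp (norm l) * (V x ^ k * exp (a * V x)))"
        by (simp add: abs_mult) (metis mult.left_commute mult_left_mono zero_le_power Vnn)
    qed
  qed
qed

lemma int_J: assumes "a < 0" shows "integrable lborel (\<lambda>x. V x ^ k * apply_bcontfun h x * exp (a * V x + apply_bcontfun l x))"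
proof -
  have "integrable lborel (\<lambda>x. norm h * (V x ^ k * exp (a * V x + apply_bcontfun l x)))"
    using int_I[OF assms] by simp
  then show ?thesis
  proof (rule Bochner_Integration.integrable_bound)
    show "(\<lambda>x. V x ^ k * apply_bcontfun h x * exp (a * V x + apply_bcontfun l x)) \<in> borel_measurable lborel" by measurable
    show "AE x in lborel. norm (V x ^ k * apply_bcontfun h x * exp (a * V x + apply_bcontfun l x)) \<le> norm (norm h * (V x ^ k * exp (a * V x + apply_bcontfun l x)))"
    proof (rule AE_I2)
      fix x
      show "norm (V x ^ k * apply_bcontfun h x * exp (a * V x + apply_bcontfun l x)) \<le> norm (norm h * (V x ^ k * exp (a * V x + apply_bcontfun l x)))"
        using bcf_bound[of h x] by (simp add: abs_mult pt3)
    qed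
  qed
qed

lemma Jk_bl: assumes "a < 0" shows "bounded_linear (Jk V k a l)"
proof (rule bounded_linear_intro[where K="Ik V k a l"])
  fix h h' :: "real \<Rightarrow>\<^sub>C real"
  show "Jk V k a l (h + h') = Jk V k a l h + Jk V k a l h'"
    unfolding Jk_def using int_J[OF assms, of k h l] int_J[OF assms, of k h' l]
    by (simp add: distrib_left distrib_right flip: integral_add)
next
  fix r h
  show "Jk V k a l (r *\<^sub>R h) = r *\<^sub>R Jk V k a l h"
    unfolding Jk_def by (simp add: mult.assoc mult.left_commute flip: integral_mult_right_zero)
next
  fix h
  have "\<bar>Jk V k a l h\<bar> \<le> (\<integral>x. norm h * (V x ^ k * exp (a * V x + apply_bcontfun l x)) \<partial>lborel)"
    unfolding Jk_def
  proof (rule integral_abs_bound_integral)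
    show "integrable lborel (\<lambda>x. norm h * (V x ^ k * exp (a * V x + apply_bcontfun l x)))"
      using int_I[OF assms] by simp
    show "integrable lborel (\<lambda>x. V x ^ k * apply_bcontfun h x * exp (a * V x + apply_bcontfun l x))"
      using int_J[OF assms] .
    fix x
    show "\<bar>V x ^ k * apply_bcontfun h x * exp (a * V x + apply_bcontfun l x)\<bar> \<le> norm h * (V x ^ k * exp (a * V x + apply_bcontfun l x))"
      using bcf_bound[of h x] by (simp add: abs_mult pt3)
  qed
  then show "norm (Jk V k a l h) \<le> norm h * Ik V k a l" by (simp add: Ik_def)
qed

end

context orl begin

lemma int_B: assumes "b < 0"
  shows "integrable lborel (\<lambda>x. V x ^ k * (V x + 1)\<^sup>2 * exp (b * V x))"
proof -
  have "integrable lborel (\<lambda>x. V x ^ (k+2) * exp (b * V x) + 2 * (V x ^ (k+1) * exp (b * V x)) + V x ^ k * exp (b * V x))"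
    by (rule Bochner_Integration.integrable_add[OF Bochner_Integration.integrable_add[OF int_pow[OF assms]
        Bochner_Integration.integrable_mult_right[OF int_pow[OF assms]]] int_pow[OF assms]])
  moreover have "(\<lambda>x. V x ^ (k+2) * exp (b * V x) + 2 * (V x ^ (k+1) * exp (b * V x)) + V x ^ k * exp (b * V x))
     = (\<lambda>x. V x ^ k * (V x + 1)\<^sup>2 * exp (b * V x))"
    by (rule ext) (simp add: power2_eq_square algebra_simps)
  ultimately show ?thesis by simp
qed

lemma Ik_deriv: assumes a0: "a0 < 0"
  shows "((\<lambda>p. Ik V k (fst p) (snd p)) has_derivative
     (\<lambda>p. fst p * Ik V (Suc k) a0 l0 + Jk V k a0 l0 (snd p))) (at (a0, l0))"
proof -
  define r where "r = min 1 (- a0 / 2)"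
  have r: "r > 0" "r \<le> 1" "r \<le> - a0 / 2" using a0 by (auto simp: r_def)
  define E where "E = exp (norm l0 + 1)"
  define Bf where "Bf = (\<lambda>x. V x ^ k * (V x + 1)\<^sup>2 * exp (a0 / 2 * V x))"
  have iBf: "integrable lborel Bf" unfolding Bf_def using a0 by (intro int_B) simp
  define C where "C = E * integral\<^sup>L lborel Bf"
  have C: "C \<ge> 0" unfolding C_def E_def Bf_def by (intro mult_nonneg_nonneg integral_nonneg) auto
  have bl1: "bounded_linear (\<lambda>p::real \<times> (real \<Rightarrow>\<^sub>C real). fst p * Ik V (Suc k) a0 l0)"
    using bounded_linear_compose[OF bounded_linear_mult_left[of "Ik V (Suc k) a0 l0"] bounded_linear_fst] by simp
  have bl2: "bounded_linear (\<lambda>p::real \<times> (real \<Rightarrow>\<^sub>C real). Jk V k a0 l0 (snd p))"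
    using bounded_linear_compose[OF Jk_bl[OF a0, of k l0] bounded_linear_snd] by simp
  show ?thesis
  proof (rule has_derivative_quad[OF bounded_linear_add[OF bl1 bl2] r(1) C])
    fix y :: "real \<times> (real \<Rightarrow>\<^sub>C real)"
    assume y: "norm (y - (a0, l0)) < r"
    obtain a l where yal: "y = (a, l)" by (cases y)
    define \<rho> where "\<rho> = norm (y - (a0, l0))"
    have ydiff: "y - (a0, l0) = (a - a0, l - l0)" by (simp add: yal)
    have s: "\<bar>a - a0\<bar> \<le> \<rho>" unfolding \<rho>_def ydiff using norm_fst_le[of "a - a0" "l - l0"] by simp
    have h: "norm (l - l0) \<le> \<rho>" unfolding \<rho>_def ydiff using norm_snd_le[of "l - l0" "a - a0"] by simp
    have \<rho>r: "\<rho> \<le> r" using y by (simp add: \<rho>_def)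
    have a: "a < 0" using s \<rho>r r a0 by linarith
    define A where "A = (\<lambda>x. V x ^ k * exp (a * V x + apply_bcontfun l x))"
    define B where "B = (\<lambda>x. V x ^ k * exp (a0 * V x + apply_bcontfun l0 x))"
    define Cc where "Cc = (\<lambda>x. V x ^ Suc k * exp (a0 * V x + apply_bcontfun l0 x))"
    define D where "D = (\<lambda>x. V x ^ k * apply_bcontfun (l - l0) x * exp (a0 * V x + apply_bcontfun l0 x))"
    have iA: "integrable lborel A" unfolding A_def by (rule int_I[OF a])
    have iB: "integrable lborel B" unfolding B_def by (rule int_I[OF a0])
    have iC: "integrable lborel Cc" unfolding Cc_def by (rule int_I[OF a0])
    have iD: "integrable lborel D" unfolding D_def by (rule int_J[OF a0])
    define G where "G = (\<lambda>x. A x - B x - ((a - a0) * Cc x + D x))"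
    have iG: "integrable lborel G" unfolding G_def using iA iB iC iD by auto
    have intG: "integral\<^sup>L lborel G = Ik V k a l - Ik V k a0 l0 - ((a - a0) * Ik V (Suc k) a0 l0 + Jk V k a0 l0 (l - l0))"
    proof -
      have "integral\<^sup>L lborel G = integral\<^sup>L lborel A - integral\<^sup>L lborel B - ((a - a0) * integral\<^sup>L lborel Cc + integral\<^sup>L lborel D)"
        unfolding G_def using iA iB iC iD by simp
      then show ?thesis by (simp add: A_def B_def Cc_def D_def Ik_def Jk_def)
    qed
    have ptb: "\<bar>G x\<bar> \<le> \<rho>\<^sup>2 * (E * Bf x)" for x
    proof -
      have "G x = V x ^ k * (exp ((a0 + (a - a0)) * V x + (apply_bcontfun l0 x + (apply_bcontfun l x - apply_bcontfun l0 x)))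
          - exp (a0 * V x + apply_bcontfun l0 x) - ((a - a0) * V x + (apply_bcontfun l x - apply_bcontfun l0 x)) * exp (a0 * V x + apply_bcontfun l0 x))"
        by (simp add: G_def A_def B_def Cc_def D_def algebra_simps)
      also have "\<bar>\<dots>\<bar> \<le> \<rho>\<^sup>2 * (exp (norm l0 + 1) * (V x ^ k * (V x + 1)\<^sup>2 * exp (a0 / 2 * V x)))"
      proof (rule rem_pt)
        show "\<bar>apply_bcontfun l x - apply_bcontfun l0 x\<bar> \<le> \<rho>"
          using bcf_bound[of "l - l0" x] h by simp
        show "\<bar>apply_bcontfun l0 x\<bar> \<le> norm l0" by (rule bcf_bound)
      qed (use s \<rho>r r in auto)
      finally show ?thesis by (simp add: E_def Bf_def)
    qed
    have "\<bar>integral\<^sup>L lborel G\<bar> \<le> (\<integral>x. \<rho>\<^sup>2 * (E * Bf x) \<partial>lborel)"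
      by (rule integral_abs_bound_integral[OF iG _ ptb]) (use iBf in simp)
    also have "\<dots> = C * \<rho>\<^sup>2" by (simp add: C_def)
    finally have "\<bar>integral\<^sup>L lborel G\<bar> \<le> C * \<rho>\<^sup>2" .
    then show "norm (Ik V k (fst y) (snd y) - Ik V k (fst (a0, l0)) (snd (a0, l0)) -
          (fst (y - (a0, l0)) * Ik V (Suc k) a0 l0 + Jk V k a0 l0 (snd (y - (a0, l0))))) \<le> C * (norm (y - (a0, l0)))\<^sup>2"
      unfolding intG by (simp add: yal \<rho>_def)
  qed
qed

end

lemma int_pos_Icc:
  fixes f :: "real \<Rightarrow> real"
  assumes f: "integrable lborel f" and nn: "\<And>x. f x \<ge> 0" and pq: "p < q"
    and lb: "\<And>x. p \<le> x \<Longrightarrow> x \<le> q \<Longrightarrow> f x \<ge> c" and c: "c > 0"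
  shows "integral\<^sup>L lborel f > 0"
proof -
  have ii: "integrable lborel (\<lambda>x. c * (indicator {p..q} x :: real))"
    by (intro Bochner_Integration.integrable_mult_right integrable_real_indicator) (auto simp: emeasure_lborel_Icc_eq)
  have "(\<integral>x. c * (indicator {p..q} x :: real) \<partial>lborel) \<le> integral\<^sup>L lborel f"
  proof (rule integral_mono[OF ii f])
    fix x show "c * (indicator {p..q} x :: real) \<le> f x"
      using lb[of x] nn[of x] by (auto simp: indicator_def)
  qed
  moreover have "(\<integral>x. c * (indicator {p..q} x :: real) \<partial>lborel) = c * (q - p)"
    using pq by simp
  moreover have "c * (q - p) > 0" using pq c by simp
  ultimately show ?thesis by linarith
qed

context orl begin

lemma I0_pos: assumes a: "a < 0" shows "Ik V 0 a l > 0"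
  unfolding Ik_def
proof (rule int_pos_Icc[of _ 0 1 "exp (a * V 1 - norm l)"])
  show "integrable lborel (\<lambda>x. V x ^ 0 * exp (a * V x + apply_bcontfun l x))" by (rule int_I[OF a])
  fix x :: real assume x: "0 \<le> x" "x \<le> 1"
  have "a * V 1 \<le> a * V x" using Vmono[OF x] a by (simp add: mult_left_mono_neg)
  moreover have "- norm l \<le> apply_bcontfun l x" using bcf_bound[of l x] by linarith
  ultimately show "exp (a * V 1 - norm l) \<le> V x ^ 0 * exp (a * V x + apply_bcontfun l x)" by simp
qed auto

lemma I1_pos: assumes a: "a < 0" shows "Ik V 1 a l > 0"
  unfolding Ik_def
proof (rule int_pos_Icc[of _ 1 2 "V 1 * exp (a * V 2 - norm l)"])
  show "integrable lborel (\<lambda>x. V x ^ 1 * exp (a * V x + apply_bcontfun l x))" by (rule int_I[OF a])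
  fix x :: real assume x: "1 \<le> x" "x \<le> 2"
  have "a * V 2 \<le> a * V x" using Vmono[of x 2] x a by (simp add: mult_left_mono_neg)
  moreover have "- norm l \<le> apply_bcontfun l x" using bcf_bound[of l x] by linarith
  ultimately have "exp (a * V 2 - norm l) \<le> exp (a * V x + apply_bcontfun l x)" by simp
  moreover have "V 1 \<le> V x" using Vmono[of 1 x] x by simp
  ultimately show "V 1 * exp (a * V 2 - norm l) \<le> V x ^ 1 * exp (a * V x + apply_bcontfun l x)"
    by (simp add: mult_mono)
qed (use V1 in auto)

lemma var_pos: assumes a: "a < 0"
  shows "Ik V 2 a l * Ik V 0 a l - (Ik V 1 a l)\<^sup>2 > 0"
proof -
  define I0 where "I0 = Ik V 0 a l"
  define I1 where "I1 = Ik V 1 a l"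
  define I2 where "I2 = Ik V 2 a l"
  have I0: "I0 > 0" using I0_pos[OF a] by (simp add: I0_def)
  have I1: "I1 > 0" using I1_pos[OF a] by (simp add: I1_def)
  define m where "m = I1 / I0"
  have m: "m > 0" using I0 I1 by (simp add: m_def)
  define E where "E = (\<lambda>x. exp (a * V x + apply_bcontfun l x))"
  have i0: "integrable lborel (\<lambda>x. V x ^ 0 * E x)" unfolding E_def by (rule int_I[OF a])
  have i1: "integrable lborel (\<lambda>x. V x ^ 1 * E x)" unfolding E_def by (rule int_I[OF a])
  have i2: "integrable lborel (\<lambda>x. V x ^ 2 * E x)" unfolding E_def by (rule int_I[OF a])
  have feq: "(\<lambda>x. (V x - m)\<^sup>2 * E x) = (\<lambda>x. V x ^ 2 * E x - 2 * m * (V x ^ 1 * E x) + m\<^sup>2 * (V x ^ 0 * E x))"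
    by (rule ext) (simp add: power2_eq_square algebra_simps)
  have fi: "integrable lborel (\<lambda>x. (V x - m)\<^sup>2 * E x)"
    unfolding feq using i0 i1 i2 by (intro Bochner_Integration.integrable_add Bochner_Integration.integrable_diff
      Bochner_Integration.integrable_mult_right) auto
  have "integral\<^sup>L lborel (\<lambda>x. (V x - m)\<^sup>2 * E x) = I2 - 2 * m * I1 + m\<^sup>2 * I0"
    unfolding feq using i0 i1 i2 by (simp add: I0_def I1_def I2_def Ik_def E_def)
  also have "\<dots> = I2 - I1\<^sup>2 / I0" using I0 by (simp add: m_def power2_eq_square field_simps)
  finally have eqi: "integral\<^sup>L lborel (\<lambda>x. (V x - m)\<^sup>2 * E x) = I2 - I1\<^sup>2 / I0" .
  define \<delta> where "\<delta> = min 1 (m / (2 * V 1))"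
  have \<delta>: "\<delta> > 0" "\<delta> \<le> 1" "\<delta> * V 1 \<le> m / 2" using m V1 by (auto simp: \<delta>_def min_def field_simps)
  have "integral\<^sup>L lborel (\<lambda>x. (V x - m)\<^sup>2 * E x) > 0"
  proof (rule int_pos_Icc[OF fi _ \<delta>(1), of "m\<^sup>2 / 4 * exp (a * (m / 2) - norm l)"])
    fix x show "(V x - m)\<^sup>2 * E x \<ge> 0" by (simp add: E_def)
  next
    fix x :: real assume x: "0 \<le> x" "x \<le> \<delta>"
    have "V x \<le> \<bar>x\<bar> * V 1" using x \<delta> by (intro Vupper) simp
    also have "\<dots> \<le> \<delta> * V 1" using x V1 by (intro mult_right_mono) auto
    finally have Vx: "V x \<le> m / 2" using \<delta> by linarith
    have "(m / 2)\<^sup>2 \<le> (V x - m)\<^sup>2"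
    proof -
      have "m / 2 \<le> m - V x" using Vx by linarith
      then have "(m / 2)\<^sup>2 \<le> (m - V x)\<^sup>2" using m by (intro power_mono) auto
      also have "\<dots> = (V x - m)\<^sup>2" by (simp add: power2_commute)
      finally show ?thesis .
    qed
    moreover have "exp (a * (m / 2) - norm l) \<le> E x"
    proof -
      have "a * (m / 2) \<le> a * V x" using Vx a by (simp add: mult_left_mono_neg)
      moreover have "- norm l \<le> apply_bcontfun l x" using bcf_bound[of l x] by linarith
      ultimately show ?thesis by (simp add: E_def)
    qed
    ultimately show "m\<^sup>2 / 4 * exp (a * (m / 2) - norm l) \<le> (V x - m)\<^sup>2 * E x"
      by (intro mult_mono) (auto simp: power_divide)
  qed (use m in simp)
  then have "I2 - I1\<^sup>2 / I0 > 0" using eqi by simp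
  then have "(I2 - I1\<^sup>2 / I0) * I0 > 0" using I0 by simp
  then show ?thesis using I0 by (simp add: I0_def I1_def I2_def field_simps)
qed

lemma Ik_DERIV: assumes a: "a < 0"
  shows "((\<lambda>b. Ik V k b l) has_real_derivative Ik V (Suc k) a l) (at a)"
proof -
  have d1: "((\<lambda>b. (b, l)) has_derivative (\<lambda>s. (s, 0))) (at a)"
    by (intro has_derivative_Pair has_derivative_ident has_derivative_const)
  have d2: "((\<lambda>p. Ik V k (fst p) (snd p)) has_derivative
     (\<lambda>p. fst p * Ik V (Suc k) a l + Jk V k a l (snd p))) (at ((\<lambda>b. (b, l)) a))"
    using Ik_deriv[OF a, of k l] by simp
  have "((\<lambda>b. Ik V k b l) has_derivative (\<lambda>s. s * Ik V (Suc k) a l + Jk V k a l 0)) (at a)"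
    using diff_chain_at[OF d1 d2] by (simp add: o_def)
  moreover have "Jk V k a l 0 = 0" by (simp add: Jk_def)
  ultimately show ?thesis
    by (intro has_derivative_imp_has_field_derivative[where D="\<lambda>s. s * Ik V (Suc k) a l"]) auto
qed

lemma phi_eq: "phiV V b l = ln (Ik V 0 b l)"
  by (simp add: phiV_def Ik_def)

lemma phi_DERIV: assumes a: "a < 0"
  shows "((\<lambda>b. phiV V b l) has_real_derivative Ik V 1 a l / Ik V 0 a l) (at a)"
proof -
  have "((\<lambda>b. ln (Ik V 0 b l)) has_real_derivative 1 / Ik V 0 a l * Ik V (Suc 0) a l) (at a)"
    by (rule DERIV_chain2[OF DERIV_ln_divide[OF I0_pos[OF a]] Ik_DERIV[OF a]])
  then show ?thesis by (simp add: phi_eq)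
qed

definition "G l b = Ik V 1 b l / Ik V 0 b l"

lemma G_DERIV: assumes a: "a < 0"
  shows "(G l has_real_derivative (Ik V 2 a l * Ik V 0 a l - (Ik V 1 a l)\<^sup>2) / (Ik V 0 a l)\<^sup>2) (at a)"
proof -
  have d0: "((\<lambda>b. Ik V 0 b l) has_real_derivative Ik V 1 a l) (at a)" using Ik_DERIV[OF a, of 0 l] by simp
  have d1: "((\<lambda>b. Ik V 1 b l) has_real_derivative Ik V 2 a l) (at a)"
    using Ik_DERIV[OF a, of 1 l] by (simp add: numeral_2_eq_2)
  have "((\<lambda>b. Ik V 1 b l / Ik V 0 b l) has_real_derivative
     (Ik V 2 a l * Ik V 0 a l - Ik V 1 a l * Ik V 1 a l) / (Ik V 0 a l * Ik V 0 a l)) (at a)"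
    by (rule DERIV_divide[OF d1 d0]) (use I0_pos[OF a, of l] in linarith)
  then show ?thesis unfolding G_def by (simp add: power2_eq_square)
qed

lemma G_DERIV_pos: assumes a: "a < 0"
  shows "(Ik V 2 a l * Ik V 0 a l - (Ik V 1 a l)\<^sup>2) / (Ik V 0 a l)\<^sup>2 > 0"
  using var_pos[OF a, of l] I0_pos[OF a, of l] by (intro divide_pos_pos) auto

lemma G_mono: assumes ab: "a < b" "b < 0" shows "G l a < G l b"
proof (rule DERIV_pos_imp_increasing[OF ab(1)])
  fix x assume "a \<le> x" "x \<le> b"
  then have x: "x < 0" using ab by simp
  show "\<exists>y. (G l has_real_derivative y) (at x) \<and> y > 0"
    using G_DERIV[OF x] G_DERIV_pos[OF x] by blast
qed

lemma G_cont: "continuous_on {..<0} (G l)"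
proof (rule DERIV_continuous_on)
  fix x :: real assume "x \<in> {..<0}"
  then show "(G l has_real_derivative (Ik V 2 x l * Ik V 0 x l - (Ik V 1 x l)\<^sup>2) / (Ik V 0 x l)\<^sup>2) (at x within {..<0})"
    using G_DERIV[of x] by (auto intro: has_field_derivative_at_within)
qed

end

lemma ind_int: fixes p q :: real shows "integrable lborel (\<lambda>x. c * (indicator {p..q} x :: real))"
  by (intro Bochner_Integration.integrable_mult_right integrable_real_indicator) (auto simp: emeasure_lborel_Icc_eq)

context orl begin

lemma int_F: assumes a: "a < 0"
  shows "integrable lborel (\<lambda>x. (V x - R) * exp (a * V x + apply_bcontfun l x))"
    and "Ik V 1 a l - R * Ik V 0 a l = (\<integral>x. (V x - R) * exp (a * V x + apply_bcontfun l x) \<partial>lborel)"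
proof -
  have i0: "integrable lborel (\<lambda>x. V x ^ 0 * exp (a * V x + apply_bcontfun l x))" by (rule int_I[OF a])
  have i1: "integrable lborel (\<lambda>x. V x ^ 1 * exp (a * V x + apply_bcontfun l x))" by (rule int_I[OF a])
  have eq: "(\<lambda>x. (V x - R) * exp (a * V x + apply_bcontfun l x)) =
    (\<lambda>x. V x ^ 1 * exp (a * V x + apply_bcontfun l x) - R * (V x ^ 0 * exp (a * V x + apply_bcontfun l x)))"
    by (rule ext) (simp add: algebra_simps)
  show "integrable lborel (\<lambda>x. (V x - R) * exp (a * V x + apply_bcontfun l x))"
    unfolding eq using i0 i1 by (intro Bochner_Integration.integrable_diff Bochner_Integration.integrable_mult_right) auto
  show "Ik V 1 a l - R * Ik V 0 a l = (\<integral>x. (V x - R) * exp (a * V x + apply_bcontfun l x) \<partial>lborel)"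
    unfolding eq Ik_def using i0 i1 by simp
qed

lemma G_gt_iff: assumes a: "a < 0" shows "G l a > R \<longleftrightarrow> Ik V 1 a l - R * Ik V 0 a l > 0"
  using I0_pos[OF a, of l] by (simp add: G_def field_simps)

lemma G_lt_iff: assumes a: "a < 0" shows "G l a < R \<longleftrightarrow> Ik V 1 a l - R * Ik V 0 a l < 0"
  using I0_pos[OF a, of l] by (simp add: G_def field_simps)

lemma G_gt: assumes R: "R > 0" shows "\<exists>a<0. G l a > R"
proof -
  define M where "M = norm l"
  have M: "M \<ge> 0" by (simp add: M_def)
  define B where "B = R / V 1 + 1"
  define A where "A = 2 * R / V 1 + 1"
  define K where "K = A + 2 * B * exp (2 * M + 1) + 1"
  have AB: "B < A" using R V1 by (simp add: A_def B_def field_simps)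
  have B0: "B > 0" using divide_pos_pos[OF R V1] by (simp add: B_def)
  have KA: "K - A = 2 * B * exp (2 * M + 1) + 1" by (simp add: K_def)
  have K0: "K > 0" using AB B0 by (simp add: K_def) (smt (verit) exp_gt_zero mult_pos_pos)
  have VK: "V K > 0" using K0 by (intro Vpos) simp
  define \<alpha> where "\<alpha> = - 1 / V K"
  have \<alpha>: "\<alpha> < 0" using VK by (simp add: \<alpha>_def)
  have \<alpha>VK: "\<alpha> * V K = -1" using VK by (simp add: \<alpha>_def)
  define E where "E = (\<lambda>x. exp (\<alpha> * V x + apply_bcontfun l x))"
  define Lf where "Lf = (\<lambda>x. (- R * exp M) * (indicator {-B..B} x :: real) + (R * exp (- M - 1)) * indicator {A..K} x)"
  have iLf: "integrable lborel Lf" unfolding Lf_def by (intro Bochner_Integration.integrable_add ind_int)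
  have intLf: "integral\<^sup>L lborel Lf = - R * exp M * (2 * B) + R * exp (- M - 1) * (K - A)"
    unfolding Lf_def using ind_int B0 AB K0 by (simp add: integral_add K_def)
  have "R * exp (- M - 1) * (K - A) = 2 * B * R * (exp (- M - 1) * exp (2 * M + 1)) + R * exp (- M - 1)"
    unfolding KA by (simp add: algebra_simps)
  also have "exp (- M - 1) * exp (2 * M + 1) = exp M" by (simp flip: exp_add)
  finally have "integral\<^sup>L lborel Lf = R * exp (- M - 1)" unfolding intLf by (simp add: algebra_simps)
  then have posLf: "integral\<^sup>L lborel Lf > 0" using R by simp
  have pt: "Lf x \<le> (V x - R) * E x" for x
  proof (cases "A \<le> x \<and> x \<le> K")
    case True
    then have xB: "\<not> (- B \<le> x \<and> x \<le> B)" using AB by auto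
    have "V 1 * (\<bar>x\<bar> - 1) \<ge> V 1 * (A - 1)" using True AB B0 V1 by (intro mult_left_mono) auto
    also have "V 1 * (A - 1) = 2 * R" using V1 by (simp add: A_def)
    finally have Vx: "V x \<ge> 2 * R" using Vlower[of x] by linarith
    have "V x \<le> V K" using True AB B0 by (intro Vmono) auto
    then have "\<alpha> * V K \<le> \<alpha> * V x" using \<alpha> by (simp add: mult_left_mono_neg)
    moreover have "- M \<le> apply_bcontfun l x" using bcf_bound[of l x] by (simp add: M_def)
    ultimately have "exp (- M - 1) \<le> E x" using \<alpha>VK by (simp add: E_def)
    moreover have "R \<le> V x - R" using Vx by simp
    ultimately have "R * exp (- M - 1) \<le> (V x - R) * E x" using R by (intro mult_mono) auto
    then show ?thesis using True xB by (simp add: Lf_def)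
  next
    case False
    note F = False
    show ?thesis
    proof (cases "- B \<le> x \<and> x \<le> B")
      case True
      have "\<alpha> * V x \<le> 0" using \<alpha> by (simp add: mult_nonpos_nonneg)
      moreover have "apply_bcontfun l x \<le> M" using bcf_bound[of l x] by (simp add: M_def)
      ultimately have "E x \<le> exp M" by (simp add: E_def)
      then have "- R * exp M \<le> - R * E x" using R by simp
      also have "\<dots> \<le> (V x - R) * E x" by (intro mult_right_mono) (auto simp: E_def)
      finally show ?thesis using True F by (simp add: Lf_def)
    next
      case False
      then have "\<bar>x\<bar> > B" by auto
      then have "V 1 * (\<bar>x\<bar> - 1) > V 1 * (B - 1)" using V1 by simp
      also have "V 1 * (B - 1) = R" using V1 by (simp add: B_def)
      finally have "V x > R" using Vlower[of x] by linarith
      then have "(V x - R) * E x \<ge> 0" by (simp add: E_def)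
      then show ?thesis using False F by (simp add: Lf_def)
    qed
  qed
  have "integral\<^sup>L lborel Lf \<le> (\<integral>x. (V x - R) * E x \<partial>lborel)"
    by (rule integral_mono[OF iLf _ pt]) (use int_F(1)[OF \<alpha>, where R=R and l=l] in \<open>simp add: E_def\<close>)
  then have "Ik V 1 \<alpha> l - R * Ik V 0 \<alpha> l > 0" using posLf int_F(2)[OF \<alpha>, where R=R and l=l] by (simp add: E_def)
  then show ?thesis using G_gt_iff[OF \<alpha>] \<alpha> by blast
qed


lemma G_lt: assumes R: "R > 0" shows "\<exists>a<0. G l a < R"
proof -
  define M where "M = norm l"
  have M: "M \<ge> 0" by (simp add: M_def)
  define \<delta> where "\<delta> = min 1 (R / (4 * V 1))"
  have \<delta>: "\<delta> > 0" "\<delta> \<le> 1" "\<delta> * V 1 \<le> R / 4" using R V1 by (auto simp: \<delta>_def min_def field_simps)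
  have iW: "integrable lborel (\<lambda>x. V x * exp (- V x))" using int_pow[of "-1" 1] by simp
  define C1 where "C1 = (\<integral>x. V x * exp (- V x) \<partial>lborel)"
  have C1: "C1 \<ge> 0" unfolding C1_def by (rule Bochner_Integration.integral_nonneg) simp
  define c1 where "c1 = 3 * R / 2 * \<delta> * exp (- M)"
  have c1: "c1 > 0" using R \<delta> by (simp add: c1_def)
  define c2 where "c2 = exp M * exp (R / 2) * C1"
  have c2: "c2 \<ge> 0" using C1 by (simp add: c2_def)
  define q where "q = c1 / (2 * (c2 + 1))"
  have q: "q > 0" using c1 c2 by (simp add: q_def)
  define \<alpha> where "\<alpha> = min (-1) (4 / R * ln q)"
  have \<alpha>1: "\<alpha> \<le> -1" by (simp add: \<alpha>_def)
  have \<alpha>: "\<alpha> < 0" using \<alpha>1 by simp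
  define t where "t = exp (\<alpha> * R / 4)"
  have t0: "t > 0" by (simp add: t_def)
  have a4: "\<alpha> \<le> 4 / R * ln q" by (simp add: \<alpha>_def)
  have "\<alpha> * R \<le> 4 / R * ln q * R" using R a4 by (intro mult_right_mono) auto
  also have "\<dots> = 4 * ln q" using R by simp
  finally have "\<alpha> * R / 4 \<le> ln q" by simp
  then have tq: "t \<le> q" unfolding t_def using q by (metis exp_le_cancel_iff exp_ln)
  define E where "E = (\<lambda>x. exp (\<alpha> * V x + apply_bcontfun l x))"
  define Uf where "Uf = (\<lambda>x. (- (3 * R / 4) * exp (\<alpha> * R / 4 - M)) * (indicator {-\<delta>..\<delta>} x :: real)
      + exp M * exp ((\<alpha> + 1) * R / 2) * (V x * exp (- V x)))"
  have iUf: "integrable lborel Uf" unfolding Uf_def using iW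
    by (intro Bochner_Integration.integrable_add ind_int Bochner_Integration.integrable_mult_right) auto
  have intUf: "integral\<^sup>L lborel Uf = - (3 * R / 4) * exp (\<alpha> * R / 4 - M) * (2 * \<delta>) + exp M * exp ((\<alpha> + 1) * R / 2) * C1"
    unfolding Uf_def C1_def using ind_int iW \<delta> by (simp add: integral_add)
  also have "\<dots> = - c1 * t + c2 * (t * t)"
  proof -
    have e1: "exp (\<alpha> * R / 4 - M) = t * exp (- M)" by (simp add: t_def flip: exp_add)
    have e2: "exp ((\<alpha> + 1) * R / 2) = t * t * exp (R / 2)"
    proof -
      have "exp ((\<alpha> + 1) * R / 2) = exp (\<alpha> * R / 4 + \<alpha> * R / 4 + R / 2)"
        by (rule arg_cong[where f=exp]) (simp add: field_simps)
      also have "\<dots> = t * t * exp (R / 2)" by (simp only: exp_add t_def)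
      finally show ?thesis .
    qed
    show ?thesis unfolding e1 e2 c1_def c2_def by (simp add: algebra_simps)
  qed
  finally have intUf': "integral\<^sup>L lborel Uf = - c1 * t + c2 * (t * t)" .
  have "c2 * (t * t) \<le> c2 * (t * q)" using c2 t0 tq by (intro mult_left_mono) auto
  also have "\<dots> = t * (c2 * q)" by simp
  also have "\<dots> < t * c1"
  proof (rule mult_strict_left_mono[OF _ t0])
    have "c2 * q = c1 * (c2 / (2 * (c2 + 1)))" by (simp add: q_def)
    also have "\<dots> < c1 * 1" using c1 c2 by (intro mult_strict_left_mono) auto
    finally show "c2 * q < c1" by simp
  qed
  finally have negUf: "integral\<^sup>L lborel Uf < 0" unfolding intUf' by (simp add: algebra_simps)
  have pt: "(V x - R) * E x \<le> Uf x" for x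
  proof (cases "- \<delta> \<le> x \<and> x \<le> \<delta>")
    case True
    have "V x \<le> \<bar>x\<bar> * V 1" using True \<delta> by (intro Vupper) (auto simp: abs_le_iff)
    also have "\<dots> \<le> \<delta> * V 1" using True V1 by (intro mult_right_mono) (auto simp: abs_le_iff)
    finally have Vx: "V x \<le> R / 4" using \<delta> by linarith
    have "\<alpha> * (R / 4) \<le> \<alpha> * V x" using Vx \<alpha> by (simp add: mult_left_mono_neg)
    moreover have "- M \<le> apply_bcontfun l x" using bcf_bound[of l x] by (simp add: M_def)
    ultimately have Ex: "exp (\<alpha> * R / 4 - M) \<le> E x" by (simp add: E_def)
    have "(V x - R) * E x \<le> (- (3 * R / 4)) * E x" using Vx by (intro mult_right_mono) (auto simp: E_def)
    also have "\<dots> \<le> (- (3 * R / 4)) * exp (\<alpha> * R / 4 - M)" using Ex R by (intro mult_left_mono_neg) auto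
    also have "\<dots> \<le> Uf x" using True by (simp add: Uf_def)
    finally show ?thesis .
  next
    case False
    note F = False
    have U: "Uf x = exp M * exp ((\<alpha> + 1) * R / 2) * (V x * exp (- V x))" using F by (simp add: Uf_def)
    show ?thesis
    proof (cases "V x \<le> R")
      case True
      have "(V x - R) * E x \<le> 0" using True by (intro mult_nonpos_nonneg) (auto simp: E_def)
      also have "0 \<le> Uf x" unfolding U by simp
      finally show ?thesis .
    next
      case False
      have "(\<alpha> + 1) * V x \<le> (\<alpha> + 1) * (R / 2)" using False R \<alpha>1 by (intro mult_left_mono_neg) auto
      then have "\<alpha> * V x \<le> (\<alpha> + 1) * R / 2 + - V x" by (simp add: algebra_simps)
      moreover have "apply_bcontfun l x \<le> M" using bcf_bound[of l x] by (simp add: M_def)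
      ultimately have "\<alpha> * V x + apply_bcontfun l x \<le> M + ((\<alpha> + 1) * R / 2 + - V x)" by linarith
      then have "E x \<le> exp M * exp ((\<alpha> + 1) * R / 2) * exp (- V x)" by (simp add: E_def flip: exp_add)
      then have "V x * E x \<le> V x * (exp M * exp ((\<alpha> + 1) * R / 2) * exp (- V x))" by (intro mult_left_mono) auto
      moreover have "(V x - R) * E x \<le> V x * E x" using R by (intro mult_right_mono) (auto simp: E_def)
      ultimately show ?thesis unfolding U by (simp add: algebra_simps)
    qed
  qed
  have "(\<integral>x. (V x - R) * E x \<partial>lborel) \<le> integral\<^sup>L lborel Uf"
    by (rule integral_mono[OF _ iUf pt]) (use int_F(1)[OF \<alpha>, where R=R and l=l] in \<open>simp add: E_def\<close>)
  then have "Ik V 1 \<alpha> l - R * Ik V 0 \<alpha> l < 0" using negUf int_F(2)[OF \<alpha>, where R=R and l=l] by (simp add: E_def)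
  then show ?thesis using G_lt_iff[OF \<alpha>] \<alpha> by blast
qed

lemma G_ex1: assumes R: "R > 0" shows "\<exists>!a. a < 0 \<and> G l a = R"
proof -
  obtain a1 where a1: "a1 < 0" "G l a1 < R" using G_lt[OF R] by blast
  obtain a2 where a2: "a2 < 0" "G l a2 > R" using G_gt[OF R] by blast
  have a12: "a1 \<le> a2"
  proof (rule ccontr)
    assume "\<not> a1 \<le> a2"
    then have "G l a2 < G l a1" using G_mono[of a2 a1 l] a1 by simp
    then show False using a1 a2 by simp
  qed
  have "continuous_on {a1..a2} (G l)" by (rule continuous_on_subset[OF G_cont]) (use a2 in auto)
  then obtain a where "a1 \<le> a" "a \<le> a2" "G l a = R" using IVT'[of "G l" a1 R a2] a1 a2 a12 by auto
  then have ex: "a < 0 \<and> G l a = R" using a2 by simp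
  show ?thesis
  proof (rule ex1I[where P="\<lambda>a. a < 0 \<and> G l a = R" and a=a])
    show "a < 0 \<and> G l a = R" by (rule ex)
    fix b assume b: "b < 0 \<and> G l b = R"
    show "b = a"
    proof (rule ccontr)
      assume "b \<noteq> a"
      then have "b < a \<or> a < b" by auto
      then show False using G_mono[of b a l] G_mono[of a b l] b ex by auto
    qed
  qed
qed

end

lemma implicit_deriv:
  fixes Fn :: "real \<times> 'a::real_normed_vector \<Rightarrow> real" and al :: "'a \<Rightarrow> real"
  assumes dF: "(Fn has_derivative (\<lambda>p. c * fst p + L (snd p))) (at (al x0, x0))"
    and c: "c \<noteq> 0" and L: "bounded_linear L" and cont: "continuous (at x0) al"
    and zero: "\<And>x. Fn (al x, x) = 0"
  shows "(al has_derivative (\<lambda>h. - L h / c)) (at x0)"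
proof -
  obtain KL where KL: "KL > 0" "\<And>h. norm (L h) \<le> norm h * KL"
    using bounded_linear.pos_bounded[OF L] by blast
  define \<gamma> where "\<gamma> = \<bar>c\<bar>"
  have \<gamma>: "\<gamma> > 0" using c by (simp add: \<gamma>_def)
  have dFa: "\<forall>e>0. \<exists>d>0. \<forall>y. norm (y - (al x0, x0)) < d \<longrightarrow>
      norm (Fn y - Fn (al x0, x0) - (c * fst (y - (al x0, x0)) + L (snd (y - (al x0, x0))))) \<le> e * norm (y - (al x0, x0))"
    using dF unfolding has_derivative_at_alt by blast
  have ct: "\<forall>e>0. \<exists>d>0. \<forall>x. dist x x0 < d \<longrightarrow> dist (al x) (al x0) < e"
    using cont unfolding continuous_at_eps_delta by blast
  have key: "\<exists>d>0. \<forall>x. norm (x - x0) < d \<longrightarrow>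
      \<bar>c * (al x - al x0) + L (x - x0)\<bar> \<le> e * (\<bar>al x - al x0\<bar> + norm (x - x0))" if e: "e > 0" for e
  proof -
    obtain d1 where d1: "d1 > 0" and h1: "\<And>y. norm (y - (al x0, x0)) < d1 \<Longrightarrow>
      norm (Fn y - Fn (al x0, x0) - (c * fst (y - (al x0, x0)) + L (snd (y - (al x0, x0))))) \<le> e * norm (y - (al x0, x0))"
      using dFa e by blast
    obtain d2 where d2: "d2 > 0" and h2: "\<And>x. dist x x0 < d2 \<Longrightarrow> dist (al x) (al x0) < d1 / 2"
      using ct d1 by (meson half_gt_zero)
    show ?thesis
    proof (intro exI[of _ "min d2 (d1 / 2)"] conjI allI impI)
      show "min d2 (d1 / 2) > 0" using d1 d2 by simp
      fix x assume x: "norm (x - x0) < min d2 (d1 / 2)"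
      have a: "\<bar>al x - al x0\<bar> < d1 / 2" using h2[of x] x by (simp add: dist_norm dist_real_def)
      have pd: "(al x, x) - (al x0, x0) = (al x - al x0, x - x0)" by simp
      have np: "norm ((al x, x) - (al x0, x0)) \<le> \<bar>al x - al x0\<bar> + norm (x - x0)"
        unfolding pd using norm_Pair_le[of "al x - al x0" "x - x0"] by simp
      then have "norm ((al x, x) - (al x0, x0)) < d1" using a x by linarith
      then have "norm (Fn (al x, x) - Fn (al x0, x0) - (c * (al x - al x0) + L (x - x0))) \<le> e * norm ((al x, x) - (al x0, x0))"
        using h1[of "(al x, x)"] by simp
      then have "\<bar>c * (al x - al x0) + L (x - x0)\<bar> \<le> e * norm ((al x, x) - (al x0, x0))"
        using zero[of x] zero[of x0] by simp
      also have "\<dots> \<le> e * (\<bar>al x - al x0\<bar> + norm (x - x0))" using np e by (intro mult_left_mono) auto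
      finally show "\<bar>c * (al x - al x0) + L (x - x0)\<bar> \<le> e * (\<bar>al x - al x0\<bar> + norm (x - x0))" .
    qed
  qed
  define K2 where "K2 = 1 + 2 * KL / \<gamma>"
  have K2: "K2 > 0" using divide_pos_pos[OF mult_pos_pos[OF _ KL(1)] \<gamma>, of 2] by (simp add: K2_def)
  obtain d1 where d1: "d1 > 0" and h1: "\<And>x. norm (x - x0) < d1 \<Longrightarrow>
      \<bar>c * (al x - al x0) + L (x - x0)\<bar> \<le> \<gamma> / 2 * (\<bar>al x - al x0\<bar> + norm (x - x0))"
    using key[of "\<gamma> / 2"] \<gamma> by auto
  have lip: "\<bar>al x - al x0\<bar> \<le> K2 * norm (x - x0)" if x: "norm (x - x0) < d1" for x
  proof -
    define u where "u = \<bar>al x - al x0\<bar>"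
    define w where "w = norm (x - x0)"
    have "\<gamma> * u = \<bar>c * (al x - al x0)\<bar>" by (simp add: u_def \<gamma>_def abs_mult)
    also have "\<dots> \<le> \<bar>c * (al x - al x0) + L (x - x0)\<bar> + \<bar>L (x - x0)\<bar>" by linarith
    also have "\<dots> \<le> \<gamma> / 2 * (u + w) + w * KL" using h1[OF x] KL(2)[of "x - x0"] by (simp add: u_def w_def)
    finally have "\<gamma> * u \<le> \<gamma> / 2 * (u + w) + w * KL" .
    moreover have "\<gamma> / 2 * (u + w) = \<gamma> / 2 * u + \<gamma> / 2 * w" by (simp add: algebra_simps)
    moreover have "(\<gamma> / 2 + KL) * w = \<gamma> / 2 * w + w * KL" by (simp add: algebra_simps)
    moreover have "\<gamma> * u = \<gamma> / 2 * u + \<gamma> / 2 * u" by simp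
    ultimately have "\<gamma> / 2 * u \<le> (\<gamma> / 2 + KL) * w" by linarith
    then have "u \<le> (\<gamma> / 2 + KL) * w / (\<gamma> / 2)" using \<gamma> by (simp add: field_simps)
    also have "(\<gamma> / 2 + KL) * w / (\<gamma> / 2) = K2 * w" using \<gamma> by (simp add: K2_def field_simps)
    finally show ?thesis by (simp add: u_def w_def)
  qed
  show ?thesis unfolding has_derivative_at_alt
  proof (intro conjI allI impI)
    show "bounded_linear (\<lambda>h. - L h / c)"
      using bounded_linear_compose[OF bounded_linear_divide[of c] bounded_linear_minus[OF L]] by simp
    fix e :: real assume e: "e > 0"
    obtain d3 where d3: "d3 > 0" and h3: "\<And>x. norm (x - x0) < d3 \<Longrightarrow>
      \<bar>c * (al x - al x0) + L (x - x0)\<bar> \<le> e * \<gamma> / (K2 + 1) * (\<bar>al x - al x0\<bar> + norm (x - x0))"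
      using key[of "e * \<gamma> / (K2 + 1)"] e \<gamma> K2 by auto
    show "\<exists>d>0. \<forall>y. norm (y - x0) < d \<longrightarrow> norm (al y - al x0 - - L (y - x0) / c) \<le> e * norm (y - x0)"
    proof (intro exI[of _ "min d1 d3"] conjI allI impI)
      show "min d1 d3 > 0" using d1 d3 by simp
      fix x assume x: "norm (x - x0) < min d1 d3"
      have "\<bar>c * (al x - al x0) + L (x - x0)\<bar> \<le> e * \<gamma> / (K2 + 1) * (\<bar>al x - al x0\<bar> + norm (x - x0))"
        using h3 x by simp
      also have "\<dots> \<le> e * \<gamma> / (K2 + 1) * (K2 * norm (x - x0) + norm (x - x0))"
        using lip[of x] x e \<gamma> K2 by (intro mult_left_mono add_right_mono) auto
      also have "\<dots> = e * \<gamma> * norm (x - x0)" using K2 by (simp add: field_simps)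
      finally have b: "\<bar>c * (al x - al x0) + L (x - x0)\<bar> \<le> e * \<gamma> * norm (x - x0)" .
      have "al x - al x0 - - L (x - x0) / c = (c * (al x - al x0) + L (x - x0)) / c" using c by (simp add: field_simps)
      then have "norm (al x - al x0 - - L (x - x0) / c) = \<bar>c * (al x - al x0) + L (x - x0)\<bar> / \<gamma>"
        by (simp add: \<gamma>_def)
      also have "\<dots> \<le> e * \<gamma> * norm (x - x0) / \<gamma>" using b \<gamma> by (intro divide_right_mono) auto
      also have "\<dots> = e * norm (x - x0)" using \<gamma> by simp
      finally show "norm (al x - al x0 - - L (x - x0) / c) \<le> e * norm (x - x0)" .
    qed
  qed
qed

context orl begin

lemma good_iff: "good_alpha V R l a \<longleftrightarrow> a < 0 \<and> G l a = R"
proof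
  assume g: "good_alpha V R l a"
  then have a: "a < 0" and d: "((\<lambda>b. phiV V b l) has_real_derivative R) (at a)" by (auto simp: good_alpha_def)
  have "G l a = R" using DERIV_unique[OF phi_DERIV[OF a, of l] d] by (simp add: G_def)
  then show "a < 0 \<and> G l a = R" using a by simp
next
  assume h: "a < 0 \<and> G l a = R"
  then have a: "a < 0" and Ga: "G l a = R" by auto
  have d1: "((\<lambda>b. phiV V b l) has_real_derivative R) (at a)" using phi_DERIV[OF a, of l] Ga by (simp add: G_def)
  have eqd: "G l x = deriv (\<lambda>b. phiV V b l) x" if "x \<in> {..<0}" for x
    using DERIV_imp_deriv[OF phi_DERIV[of x l]] that by (simp add: G_def)
  have d2: "(deriv (\<lambda>b. phiV V b l) has_real_derivative (Ik V 2 a l * Ik V 0 a l - (Ik V 1 a l)\<^sup>2) / (Ik V 0 a l)\<^sup>2) (at a)"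
    by (rule has_field_derivative_transform_within_open[where S="{..<0}", OF G_DERIV[OF a]]) (use a eqd in auto)
  show "good_alpha V R l a" unfolding good_alpha_def using a d1 d2 G_DERIV_pos[OF a, of l] by blast
qed

lemma alpha_props: assumes R: "R > 0" shows "alpha_of V R l < 0 \<and> G l (alpha_of V R l) = R"
proof -
  have ex1: "\<exists>!a. good_alpha V R l a" using G_ex1[OF R, of l] by (simp add: good_iff)
  have "good_alpha V R l (alpha_of V R l)" unfolding alpha_of_def by (rule theI'[OF ex1])
  then show ?thesis by (simp add: good_iff)
qed

lemma f_DERIV: assumes x: "x < 0"
  shows "((\<lambda>b. phiV V b l - b * R) has_real_derivative (G l x - R)) (at x)"
proof -
  have d1: "((\<lambda>b. phiV V b l) has_real_derivative G l x) (at x)" using phi_DERIV[OF x, of l] by (simp add: G_def)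
  have d2: "((\<lambda>b. b * R) has_real_derivative R) (at x)" by (auto intro!: derivative_eq_intros)
  show ?thesis by (rule DERIV_diff[OF d1 d2])
qed

lemma f_cont: assumes "q < 0" shows "continuous_on {p..q} (\<lambda>b. phiV V b l - b * R)"
proof (rule continuous_at_imp_continuous_on, rule ballI)
  fix x assume "x \<in> {p..q}"
  then have "x < 0" using assms by auto
  then show "isCont (\<lambda>b. phiV V b l - b * R) x" by (rule DERIV_isCont[OF f_DERIV])
qed

lemma inf_eq: assumes R: "R > 0"
  shows "phiV V (alpha_of V R l) l - alpha_of V R l * R = (INF a\<in>{..<0}. phiV V a l - a * R)"
proof -
  define a0 where "a0 = alpha_of V R l"
  have a0: "a0 < 0" "G l a0 = R" using alpha_props[OF R, of l] by (auto simp: a0_def)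
  define f where "f = (\<lambda>b. phiV V b l - b * R)"
  have minf: "f a0 \<le> f b" if b: "b < 0" for b
  proof (cases "b \<le> a0")
    case True
    have "f b \<ge> f a0" unfolding f_def
    proof (rule DERIV_nonpos_imp_decreasing_open[OF True])
      fix x assume x: "b < x" "x < a0"
      then have "G l x < R" using G_mono[of x a0 l] a0 by simp
      then show "\<exists>y. ((\<lambda>b. phiV V b l - b * R) has_real_derivative y) (at x) \<and> y \<le> 0"
        using f_DERIV[of x l] x a0 by (intro exI[of _ "G l x - R"]) auto
    qed (rule f_cont[OF a0(1)])
    then show ?thesis .
  next
    case False
    then have ab: "a0 \<le> b" by simp
    show "f a0 \<le> f b" unfolding f_def
    proof (rule DERIV_nonneg_imp_increasing_open[OF ab])
      fix x assume x: "a0 < x" "x < b"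
      then have "G l x > R" using G_mono[of a0 x l] a0 b by simp
      then show "\<exists>y. ((\<lambda>b. phiV V b l - b * R) has_real_derivative y) (at x) \<and> y \<ge> 0"
        using f_DERIV[of x l] x b by (intro exI[of _ "G l x - R"]) auto
    qed (rule f_cont[OF b])
  qed
  have "Inf (f ` {..<0}) = f a0"
    by (rule cInf_eq_minimum) (use a0 minf in auto)
  then show ?thesis by (simp add: f_def a0_def)
qed

lemma Ik_cont_l: assumes a: "a < 0" shows "isCont (\<lambda>l. Ik V k a l) l0"
proof -
  have c1: "isCont (\<lambda>l. (a, l)) l0" by (intro continuous_intros)
  have c2: "isCont (\<lambda>p. Ik V k (fst p) (snd p)) (a, l0)"
    by (rule has_derivative_continuous[OF Ik_deriv[OF a, of k l0]])
  show ?thesis using isCont_o2[OF c1 c2] by simp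
qed

lemma cont_alpha: assumes R: "R > 0" shows "continuous (at l0) (alpha_of V R)"
proof -
  define a0 where "a0 = alpha_of V R l0"
  have a0: "a0 < 0" "G l0 a0 = R" using alpha_props[OF R, of l0] by (auto simp: a0_def)
  show ?thesis unfolding continuous_at tendsto_iff
  proof (intro allI impI)
    fix e :: real assume e: "e > 0"
    define \<epsilon> where "\<epsilon> = min (e / 2) (- a0 / 2)"
    have \<epsilon>: "\<epsilon> > 0" "\<epsilon> < e" "a0 + \<epsilon> < 0" using e a0 by (auto simp: \<epsilon>_def)
    have am: "a0 - \<epsilon> < 0" using \<epsilon> a0 by simp
    have ap: "a0 + \<epsilon> < 0" using \<epsilon> by simp
    have "G l0 (a0 - \<epsilon>) < R" using G_mono[of "a0 - \<epsilon>" a0 l0] a0 \<epsilon> by simp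
    then have Fm: "Ik V 1 (a0 - \<epsilon>) l0 - R * Ik V 0 (a0 - \<epsilon>) l0 < 0" using G_lt_iff[OF am] by simp
    have "G l0 (a0 + \<epsilon>) > R" using G_mono[of a0 "a0 + \<epsilon>" l0] a0 \<epsilon> by simp
    then have Fp: "Ik V 1 (a0 + \<epsilon>) l0 - R * Ik V 0 (a0 + \<epsilon>) l0 > 0" using G_gt_iff[OF ap] by simp
    have cm: "isCont (\<lambda>l. Ik V 1 (a0 - \<epsilon>) l - R * Ik V 0 (a0 - \<epsilon>) l) l0"
      using Ik_cont_l[OF am, of l0 1] Ik_cont_l[OF am, of l0 0] by (intro continuous_intros) auto
    have cp: "isCont (\<lambda>l. Ik V 1 (a0 + \<epsilon>) l - R * Ik V 0 (a0 + \<epsilon>) l) l0"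
      using Ik_cont_l[OF ap, of l0 1] Ik_cont_l[OF ap, of l0 0] by (intro continuous_intros) auto
    have ev1: "eventually (\<lambda>l. Ik V 1 (a0 - \<epsilon>) l - R * Ik V 0 (a0 - \<epsilon>) l < 0) (at l0)"
      using order_tendstoD(2)[OF cm[unfolded isCont_def] Fm] .
    have ev2: "eventually (\<lambda>l. Ik V 1 (a0 + \<epsilon>) l - R * Ik V 0 (a0 + \<epsilon>) l > 0) (at l0)"
      using order_tendstoD(1)[OF cp[unfolded isCont_def] Fp] .
    show "eventually (\<lambda>l. dist (alpha_of V R l) (alpha_of V R l0) < e) (at l0)"
    proof (rule eventually_mono[OF eventually_conj[OF ev1 ev2]])
      fix l assume h: "Ik V 1 (a0 - \<epsilon>) l - R * Ik V 0 (a0 - \<epsilon>) l < 0 \<and> Ik V 1 (a0 + \<epsilon>) l - R * Ik V 0 (a0 + \<epsilon>) l > 0"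
      have g1: "G l (a0 - \<epsilon>) < R" using h G_lt_iff[OF am] by simp
      have g2: "G l (a0 + \<epsilon>) > R" using h G_gt_iff[OF ap] by simp
      define b where "b = alpha_of V R l"
      have b: "b < 0" "G l b = R" using alpha_props[OF R, of l] by (auto simp: b_def)
      have "a0 - \<epsilon> < b"
      proof (rule ccontr)
        assume "\<not> a0 - \<epsilon> < b"
        then have "b < a0 - \<epsilon> \<or> b = a0 - \<epsilon>" by auto
        then show False using G_mono[of b "a0 - \<epsilon>" l] g1 b am by auto
      qed
      moreover have "b < a0 + \<epsilon>"
      proof (rule ccontr)
        assume "\<not> b < a0 + \<epsilon>"
        then have "a0 + \<epsilon> < b \<or> b = a0 + \<epsilon>" by auto
        then show False using G_mono[of "a0 + \<epsilon>" b l] g2 b by auto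
      qed
      ultimately show "dist (alpha_of V R l) (alpha_of V R l0) < e"
        using \<epsilon> by (simp add: b_def[symmetric] a0_def[symmetric] dist_real_def abs_less_iff)
    qed
  qed
qed

end

context orl begin

lemma diff_main: assumes R: "R > 0"
  shows "(\<lambda>mu. phiV V (alpha_of V R mu) mu) differentiable (at l0)"
proof -
  define al where "al = alpha_of V R"
  have alp: "al x < 0" "G x (al x) = R" for x using alpha_props[OF R, of x] by (auto simp: al_def)
  have a0: "al l0 < 0" by (rule alp(1))
  define Fn where "Fn = (\<lambda>p::real \<times> (real \<Rightarrow>\<^sub>C real). Ik V 1 (fst p) (snd p) - R * Ik V 0 (fst p) (snd p))"
  define c where "c = Ik V 2 (al l0) l0 - R * Ik V 1 (al l0) l0"
  define L where "L = (\<lambda>h. Jk V 1 (al l0) l0 h - R * Jk V 0 (al l0) l0 h)"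
  have d1: "((\<lambda>p. Ik V 1 (fst p) (snd p)) has_derivative
     (\<lambda>p. fst p * Ik V (Suc 1) (al l0) l0 + Jk V 1 (al l0) l0 (snd p))) (at (al l0, l0))"
    by (rule Ik_deriv[OF a0])
  have d0: "((\<lambda>p. Ik V 0 (fst p) (snd p)) has_derivative
     (\<lambda>p. fst p * Ik V (Suc 0) (al l0) l0 + Jk V 0 (al l0) l0 (snd p))) (at (al l0, l0))"
    by (rule Ik_deriv[OF a0])
  have dF0: "(Fn has_derivative (\<lambda>p. (fst p * Ik V (Suc 1) (al l0) l0 + Jk V 1 (al l0) l0 (snd p))
      - R * (fst p * Ik V (Suc 0) (al l0) l0 + Jk V 0 (al l0) l0 (snd p)))) (at (al l0, l0))"
    unfolding Fn_def by (rule has_derivative_diff[OF d1 has_derivative_mult_right[OF d0]])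
  have dF: "(Fn has_derivative (\<lambda>p. c * fst p + L (snd p))) (at (al l0, l0))"
    by (rule has_derivative_eq_rhs[OF dF0]) (simp add: fun_eq_iff c_def L_def numeral_2_eq_2 algebra_simps)
  have I0: "Ik V 0 (al l0) l0 > 0" by (rule I0_pos[OF a0])
  have I1R: "Ik V 1 (al l0) l0 = R * Ik V 0 (al l0) l0"
    using alp(2)[of l0] I0 by (simp add: G_def field_simps)
  have "c * Ik V 0 (al l0) l0 = Ik V 2 (al l0) l0 * Ik V 0 (al l0) l0 - Ik V 1 (al l0) l0 * (R * Ik V 0 (al l0) l0)"
    unfolding c_def by (simp add: algebra_simps)
  also have "\<dots> = Ik V 2 (al l0) l0 * Ik V 0 (al l0) l0 - (Ik V 1 (al l0) l0)\<^sup>2"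
    by (simp only: I1R[symmetric] power2_eq_square)
  finally have "c * Ik V 0 (al l0) l0 = Ik V 2 (al l0) l0 * Ik V 0 (al l0) l0 - (Ik V 1 (al l0) l0)\<^sup>2" .
  then have "c * Ik V 0 (al l0) l0 > 0" using var_pos[OF a0, of l0] by simp
  then have c0: "c \<noteq> 0" using I0 by auto
  have bL: "bounded_linear L" unfolding L_def
    by (rule bounded_linear_sub[OF Jk_bl[OF a0] bounded_linear_compose[OF bounded_linear_mult_right Jk_bl[OF a0]]])
  have zero: "Fn (al x, x) = 0" for x
    using alp[of x] I0_pos[OF alp(1)[of x], of x] by (simp add: Fn_def G_def field_simps)
  have cont: "continuous (at l0) al" unfolding al_def by (rule cont_alpha[OF R])
  have dal: "(al has_derivative (\<lambda>h. - L h / c)) (at l0)"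
    by (rule implicit_deriv[OF dF c0 bL cont zero])
  have dpair: "((\<lambda>mu. (al mu, mu)) has_derivative (\<lambda>h. (- L h / c, h))) (at l0)"
    by (rule has_derivative_Pair[OF dal has_derivative_ident])
  have dI: "((\<lambda>mu. Ik V 0 (al mu) mu) has_derivative
     ((\<lambda>p. fst p * Ik V (Suc 0) (al l0) l0 + Jk V 0 (al l0) l0 (snd p)) \<circ> (\<lambda>h. (- L h / c, h)))) (at l0)"
    using diff_chain_at[OF dpair d0] by (simp add: o_def)
  have dI': "(\<lambda>mu. Ik V 0 (al mu) mu) differentiable (at l0)" by (rule differentiableI[OF dI])
  have dln: "ln differentiable (at (Ik V 0 (al l0) l0))"
    by (rule differentiableI[OF has_field_derivative_imp_has_derivative[OF DERIV_ln_divide[OF I0]]])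
  have "(\<lambda>mu. ln (Ik V 0 (al mu) mu)) differentiable (at l0)"
    by (rule differentiable_compose[of ln, OF dln dI'])
  then show ?thesis by (simp add: phi_eq al_def)
qed

end

theorem mainTheorem3:
  fixes V :: "real \<Rightarrow> real" and R :: real
  assumes "orlicz V" and "R > 0"
  shows "(\<forall>lam. \<exists>!a. good_alpha V R lam a)
    \<and> (\<forall>lam. (\<lambda>mu. phiV V (alpha_of V R mu) mu) differentiable (at lam))
    \<and> (\<forall>lam. phiV V (alpha_of V R lam) lam - alpha_of V R lam * R
           = (INF a\<in>{..<0}. phiV V a lam - a * R))"
proof -
  interpret orl V using assms(1) by unfold_locales
  have p1: "\<exists>!a. good_alpha V R lam a" for lam
    using G_ex1[OF assms(2), of lam] by (simp add: good_iff)
  show ?thesis using p1 diff_main[OF assms(2)] inf_eq[OF assms(2)] by blast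
qed

end
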